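(* In the procedure of obtaining a 2-swap optimal solution for $P2\|C_{\max}$ with $n$ jobs (i.e., repeatedly replacing the current schedule by an improving 2-swap neighbor), the critical machine changes at most $O(n^2)$ times.
   Context: Problem $P2\|C_{\max}$: $n$ jobs with processing times $p_j>0$, two identical machines. A schedule $\sigma=(M_1,M_2)$ partitions the jobs into sets processed on machines 1 and 2; loads $L_i=\sum_{j\in M_i}p_j$, makespan $\max_iL_i$; a machine whose load equals the makespan is critical. A 2-swap neighbor is obtained by choosing $k'$ jobs on one machine and $k''$ on the other with $k'+k''\le2$ and interchanging their machine assignments; it is improving if its makespan is strictly smaller. A 2-swap optimal solution has no improving 2-swap neighbor. *)

theory Defs
  imports Complex_Main
begin

text \<open>Jobs are 0..<n with processing times p. A schedule is represented by the
set M1 of jobs on machine 1; machine 2 receives {0..<n} - M1.\<close>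

definition load1 :: "(nat \<Rightarrow> real) \<Rightarrow> nat set \<Rightarrow> real" where
  "load1 p M1 = (\<Sum>j\<in>M1. p j)"

definition load2 :: "nat \<Rightarrow> (nat \<Rightarrow> real) \<Rightarrow> nat set \<Rightarrow> real" where
  "load2 n p M1 = (\<Sum>j\<in>{0..<n} - M1. p j)"

definition makespan :: "nat \<Rightarrow> (nat \<Rightarrow> real) \<Rightarrow> nat set \<Rightarrow> real" where
  "makespan n p M1 = max (load1 p M1) (load2 n p M1)"

definition critical :: "nat \<Rightarrow> (nat \<Rightarrow> real) \<Rightarrow> nat set \<Rightarrow> nat" where
  "critical n p M1 = (if load2 n p M1 \<le> load1 p M1 then 1 else 2)"

definition two_swap_neighbor :: "nat \<Rightarrow> nat set \<Rightarrow> nat set \<Rightarrow> bool" where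
  "two_swap_neighbor n M1 M1' \<longleftrightarrow>
     (\<exists>A B. A \<subseteq> M1 \<and> B \<subseteq> {0..<n} - M1 \<and> card A + card B \<le> 2 \<and>
            M1' = (M1 - A) \<union> B)"

definition improving_2swap :: "nat \<Rightarrow> (nat \<Rightarrow> real) \<Rightarrow> nat set \<Rightarrow> nat set \<Rightarrow> bool" where
  "improving_2swap n p M1 M1' \<longleftrightarrow>
     two_swap_neighbor n M1 M1' \<and> makespan n p M1' < makespan n p M1"

end

theory Submission
  imports Defs
begin

definition gg :: "nat \<Rightarrow> (nat \<Rightarrow> real) \<Rightarrow> nat \<Rightarrow> real" where
  "gg n p u = (if u < n then p u else if u < 2*n then - p (u - n) else 0)"

lemma load1_swap:
  assumes M: "M \<subseteq> {0..<n}" and A: "A \<subseteq> M" and B: "B \<subseteq> {0..<n} - M"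
  shows "load1 p ((M - A) \<union> B) = load1 p M - sum p A + sum p B"
proof -
  have fM: "finite M" using M finite_subset by blast
  have fB: "finite B" using B finite_subset by blast
  have fA: "finite A" using A fM finite_subset by blast
  have "sum p ((M - A) \<union> B) = sum p (M - A) + sum p B"
    using B fM fB by (intro sum.union_disjoint) auto
  moreover have "sum p (M - A) = sum p M - sum p A" using A fM by (simp add: sum_diff)
  ultimately show ?thesis unfolding load1_def by simp
qed

lemma diff_repr:
  assumes M: "M \<subseteq> {0..<n}" and A: "A \<subseteq> M" and B: "B \<subseteq> {0..<n} - M"
    and c: "card A + card B \<le> 2"
  shows "\<exists>u<2*n+1. \<exists>v<2*n+1. sum p B - sum p A = gg n p u + gg n p v"
proof -
  have fM: "finite M" using M finite_subset by blast
  have fB: "finite B" using B finite_subset by blast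
  have fA: "finite A" using A fM finite_subset by blast
  have z: "gg n p (2*n) = 0" unfolding gg_def by simp
  have pos: "\<And>a. a \<in> B \<Longrightarrow> gg n p a = p a" using B unfolding gg_def by auto
  have neg: "\<And>a. a \<in> A \<Longrightarrow> gg n p (a + n) = - p a" using A M unfolding gg_def by auto
  have Alt: "\<And>a. a \<in> A \<Longrightarrow> a + n < 2*n+1" using A M by auto
  have Blt: "\<And>a. a \<in> B \<Longrightarrow> a < 2*n+1" using B by auto
  have AB: "A \<inter> B = {}" using A B by auto
  have "card A \<le> 2" "card B \<le> 2" using c by auto
  consider "card A = 0" "card B = 0" | "card A = 0" "card B = 1" | "card A = 0" "card B = 2"
    | "card A = 1" "card B = 0" | "card A = 1" "card B = 1" | "card A = 2" "card B = 0"
    using c by linarith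
  then show ?thesis
  proof cases
    case 1
    then have "A = {}" "B = {}" using fA fB by auto
    then show ?thesis using z by (intro exI[of _ "2*n"]) auto
  next
    case 2
    then obtain b where "A = {}" "B = {b}" using fA by (auto simp: card_1_singleton_iff)
    then show ?thesis using z pos[of b] Blt[of b]
      by (intro exI[of _ "b"] conjI exI[of _ "2*n"]) auto
  next
    case 3
    then obtain a b where "A = {}" "B = {a,b}" "a \<noteq> b" using fA by (auto simp: card_2_iff)
    then show ?thesis using pos[of b] Blt[of b] pos[of a] Blt[of a]
      by (intro exI[of _ "a"] conjI exI[of _ "b"]) auto
  next
    case 4
    then obtain a where "B = {}" "A = {a}" using fB by (auto simp: card_1_singleton_iff)
    then show ?thesis using z neg[of a] Alt[of a]
      by (intro exI[of _ "a+n"] conjI exI[of _ "2*n"]) auto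
  next
    case 5
    then obtain a b where "B = {b}" "A = {a}" by (auto simp: card_1_singleton_iff)
    then show ?thesis using neg[of a] Alt[of a] pos[of b] Blt[of b]
      by (intro exI[of _ "a+n"] conjI exI[of _ "b"]) auto
  next
    case 6
    then obtain a b where "B = {}" "A = {a,b}" "a \<noteq> b" using fB by (auto simp: card_2_iff)
    then show ?thesis using neg[of b] Alt[of b] neg[of a] Alt[of a]
      by (intro exI[of _ "a+n"] conjI exI[of _ "b+n"]) auto
  qed
qed

lemma step:
  assumes M: "M \<subseteq> {0..<n}" and N: "two_swap_neighbor n M M'"
  shows "M' \<subseteq> {0..<n} \<and> (\<exists>u<2*n+1. \<exists>v<2*n+1. load1 p M' - load1 p M = gg n p u + gg n p v)"
proof -
  obtain A B where A: "A \<subseteq> M" and B: "B \<subseteq> {0..<n} - M" and c: "card A + card B \<le> 2"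
    and e: "M' = (M - A) \<union> B" using N unfolding two_swap_neighbor_def by blast
  have "M' \<subseteq> {0..<n}" using e M B by auto
  moreover have "load1 p M' - load1 p M = sum p B - sum p A"
    using load1_swap[OF M A B, of p] e by simp
  ultimately show ?thesis using diff_repr[OF M A B c, of p] by simp
qed

lemma load2_eq:
  assumes "M \<subseteq> {0..<n}"
  shows "load2 n p M = sum p {0..<n} - load1 p M"
  unfolding load2_def load1_def using assms by (simp add: sum_diff)

theorem lemma6:
  shows "\<exists>C::real. \<forall>(n::nat) (p::nat \<Rightarrow> real) (\<sigma>::nat \<Rightarrow> nat set) (K::nat).
     (\<forall>j<n. p j > 0) \<and> \<sigma> 0 \<subseteq> {0..<n} \<and>
     (\<forall>k<K. improving_2swap n p (\<sigma> k) (\<sigma> (Suc k)))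
     \<longrightarrow> real (card {k. k < K \<and> critical n p (\<sigma> (Suc k)) \<noteq> critical n p (\<sigma> k)})
           \<le> C * (real n)\<^sup>2 + C"
proof (intro exI[of _ 9] allI impI)
  fix n p \<sigma> K
  assume H: "(\<forall>j<n. p j > (0::real)) \<and> \<sigma> 0 \<subseteq> {0..<n} \<and>
     (\<forall>k<K. improving_2swap n p (\<sigma> k) (\<sigma> (Suc k)))"
  define T where "T = sum p {0..<n}"
  define s where "s k = 2 * load1 p (\<sigma> k) - T" for k
  define D where "D k = load1 p (\<sigma> (Suc k)) - load1 p (\<sigma> k)" for k
  define S where "S = {k. k < K \<and> critical n p (\<sigma> (Suc k)) \<noteq> critical n p (\<sigma> k)}"
  define W where "W = (\<lambda>(u,v). gg n p u + gg n p v) ` ({..<2*n+1} \<times> {..<2*n+1})"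
  have sub: "k \<le> K \<Longrightarrow> \<sigma> k \<subseteq> {0..<n}" for k
  proof (induction k)
    case 0 then show ?case using H by simp
  next
    case (Suc k)
    then show ?case using H step[of "\<sigma> k" n "\<sigma> (Suc k)"] unfolding improving_2swap_def by auto
  qed
  have DW: "k < K \<Longrightarrow> D k \<in> W" for k
  proof -
    assume k: "k < K"
    then obtain u v where "u<2*n+1" "v<2*n+1" "D k = gg n p u + gg n p v"
      using step[of "\<sigma> k" n "\<sigma> (Suc k)" p] sub[of k] H unfolding improving_2swap_def D_def
      by auto
    then show ?thesis unfolding W_def by force
  qed
  have mk: "k \<le> K \<Longrightarrow> makespan n p (\<sigma> k) = (T + \<bar>s k\<bar>) / 2" for k
    using load2_eq[OF sub[of k], of p] unfolding makespan_def s_def T_def by (auto simp: max_def abs_if)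
  have cr: "k \<le> K \<Longrightarrow> critical n p (\<sigma> k) = (if s k \<ge> 0 then 1 else 2)" for k
    using load2_eq[OF sub[of k], of p] unfolding critical_def s_def T_def by auto
  have dec1: "k < K \<Longrightarrow> \<bar>s (Suc k)\<bar> < \<bar>s k\<bar>" for k
    using H mk[of k] mk[of "Suc k"] unfolding improving_2swap_def by auto
  have decd: "k + Suc d \<le> K \<Longrightarrow> \<bar>s (k + Suc d)\<bar> < \<bar>s k\<bar>" for k d
  proof (induction d)
    case 0 then show ?case using dec1[of k] by simp
  next
    case (Suc d)
    then show ?case using dec1[of "k + Suc d"] by simp
  qed
  have dec: "k < k' \<Longrightarrow> k' \<le> K \<Longrightarrow> \<bar>s k'\<bar> < \<bar>s k\<bar>" for k k'
    using decd[of k "k' - k - 1"] by simp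
  have sD: "s (Suc k) - s k = 2 * D k" for k unfolding s_def D_def by simp
  have absD: "k \<in> S \<Longrightarrow> 2 * \<bar>D k\<bar> = \<bar>s k\<bar> + \<bar>s (Suc k)\<bar>" for k
  proof -
    assume "k \<in> S"
    then have "k < K" "(s k \<ge> 0) \<noteq> (s (Suc k) \<ge> 0)" unfolding S_def using cr[of k] cr[of "Suc k"]
      by (auto split: if_splits)
    then show ?thesis using sD[of k] by auto
  qed
  have inj: "inj_on D S"
  proof (rule inj_onI)
    fix x y assume xS: "x \<in> S" and yS: "y \<in> S" and e: "D x = D y"
    have lt: "\<bar>D b\<bar> < \<bar>D a\<bar>" if "a \<in> S" "b \<in> S" "a < b" for a b
    proof -
      have "b < K" using that unfolding S_def by auto
      then have "\<bar>s b\<bar> < \<bar>s a\<bar>" "\<bar>s (Suc b)\<bar> \<le> \<bar>s (Suc a)\<bar>"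
        using dec[of a b] dec[of "Suc a" "Suc b"] that by fastforce+
      then show ?thesis using absD[OF that(1)] absD[OF that(2)] by linarith
    qed
    show "x = y"
    proof (rule ccontr)
      assume "x \<noteq> y"
      then consider "x < y" | "y < x" by linarith
      then show False using lt[OF xS yS] lt[OF yS xS] e by cases auto
    qed
  qed
  have "D ` S \<subseteq> W" using DW unfolding S_def by auto
  then have "card S \<le> card W" using inj
    by (metis card_image card_mono finite_imageI finite_SigmaI finite_lessThan W_def)
  also have "card W \<le> (2*n+1) * (2*n+1)" unfolding W_def
    using card_image_le[of "{..<2*n+1} \<times> {..<2*n+1}"] by (simp add: card_cartesian_product)
  finally have "real (card S) \<le> real ((2*n+1)*(2*n+1))" by linarith
  also have "\<dots> \<le> 9 * (real n)\<^sup>2 + 9" using zero_le_power2[of "real n - 1"] by (simp add: power2_eq_square algebra_simps)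
  finally show "real (card {k. k < K \<and> critical n p (\<sigma> (Suc k)) \<noteq> critical n p (\<sigma> k)})
           \<le> 9 * (real n)\<^sup>2 + 9" unfolding S_def .
qed

end
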